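(* Let $0<u<v<1$. Suppose $\mathcal E^c_u(z)=\mathcal E^c_v(z)=\mathcal E_u(z)$ for some $z\in\mathbb R$. Then $\mathcal E^c_u=\mathcal E^c_v$ on $(-\infty,z]$.
   Context: Let $\mu,\nu$ be probability measures on $\mathbb R$ with finite first moments and $\mu\le_{cx}\nu$. Put $P_\eta(k)=\int(k-x)^+\eta(dx)$. Let $G$ be any quantile function of $\mu$. For $u\in(0,1)$ let $\mu_u(A)=\mu(A\cap(-\infty,G(u)))+\big(u-\mu((-\infty,G(u)))\big)\delta_{G(u)}(A)$ and $\mathcal E_u=P_\nu-P_{\mu_u}$. $f^c$ denotes the largest convex function lying below $f$. *)

theory Defs
  imports "HOL-Probability.Probability"
begin

definition cx_le :: "real measure \<Rightarrow> real measure \<Rightarrow> bool" where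
  "cx_le mu nu \<longleftrightarrow>
     (\<forall>\<phi>::real \<Rightarrow> real. convex_on UNIV \<phi> \<longrightarrow> integrable mu \<phi> \<longrightarrow> integrable nu \<phi> \<longrightarrow>
        integral\<^sup>L mu \<phi> \<le> integral\<^sup>L nu \<phi>)"

definition put_fun :: "real measure \<Rightarrow> real \<Rightarrow> real" where
  "put_fun eta k = integral\<^sup>L eta (\<lambda>x. max (k - x) 0)"

definition is_quantile :: "real measure \<Rightarrow> (real \<Rightarrow> real) \<Rightarrow> bool" where
  "is_quantile mu G \<longleftrightarrow>
     (\<forall>u\<in>{0<..<1}. measure mu {..<G u} \<le> u \<and> u \<le> measure mu {..G u})"

text \<open>P_{mu_u}(k), where mu_u = mu restricted to (-inf, G u) plus an atom of mass
  u - mu((-inf,G u)) at G u; the integral against mu_u written out.\<close>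
definition put_fun_trunc :: "real measure \<Rightarrow> (real \<Rightarrow> real) \<Rightarrow> real \<Rightarrow> real \<Rightarrow> real" where
  "put_fun_trunc mu G u k =
     (LINT x:{..<G u}|mu. max (k - x) 0) + (u - measure mu {..<G u}) * max (k - G u) 0"

definition E_fun :: "real measure \<Rightarrow> real measure \<Rightarrow> (real \<Rightarrow> real) \<Rightarrow> real \<Rightarrow> real \<Rightarrow> real" where
  "E_fun mu nu G u k = put_fun nu k - put_fun_trunc mu G u k"

definition convex_hull_fun :: "(real \<Rightarrow> real) \<Rightarrow> real \<Rightarrow> real" where
  "convex_hull_fun f x = Sup {g x | g. convex_on UNIV g \<and> (\<forall>y. g y \<le> f y)}"

end

theory Submission
  imports Defs
begin

lemma conv3:
  fixes f :: "real \<Rightarrow> real"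
  assumes "convex_on UNIV f" "x < y" "x \<le> m" "m \<le> y"
  shows "f m * (y - x) \<le> (y - m) * f x + (m - x) * f y"
proof -
  define t where "t = (m - x) / (y - x)"
  have t0: "0 \<le> t" "t \<le> 1" using assms by (auto simp: t_def field_simps)
  have tt: "t * (y - x) = m - x" using assms(2) by (simp add: t_def)
  have "(1 - t) *\<^sub>R x + t *\<^sub>R y = m" using tt by (simp add: algebra_simps)
  then have "f m \<le> (1 - t) * f x + t * f y"
    using convex_onD[OF assms(1) t0] by fastforce
  then have "f m * (y - x) \<le> ((1 - t) * f x + t * f y) * (y - x)"
    using assms(2) by (simp add: mult_right_mono)
  also have "\<dots> = (y - x) * f x - (t * (y - x)) * f x + (t * (y - x)) * f y"
    by (simp add: algebra_simps)
  also have "\<dots> = (y - m) * f x + (m - x) * f y"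
    unfolding tt by (simp add: algebra_simps)
  finally show ?thesis .
qed

lemma conv3I:
  fixes f :: "real \<Rightarrow> real"
  assumes "\<And>x m y. x < m \<Longrightarrow> m < y \<Longrightarrow> f m * (y - x) \<le> (y - m) * f x + (m - x) * f y"
  shows "convex_on UNIV f"
proof (rule convex_on_linorderI)
  fix t x y :: real assume t: "0 < t" "t < 1" and xy: "x < y"
  define m where "m = (1 - t) *\<^sub>R x + t *\<^sub>R y"
  have e1: "y - m = (1 - t) * (y - x)" "m - x = t * (y - x)" by (auto simp: m_def algebra_simps)
  have "0 < (1 - t) * (y - x)" "0 < t * (y - x)" using t xy by auto
  then have m: "x < m" "m < y" using e1 by linarith+
  have "f m * (y - x) \<le> ((1 - t) * f x + t * f y) * (y - x)"
    using assms[OF m] by (simp add: e1 algebra_simps)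
  then show "f ((1 - t) *\<^sub>R x + t *\<^sub>R y) \<le> (1 - t) * f x + t * f y"
    using xy by (simp add: m_def)
qed simp

lemma glue:
  fixes \<phi> \<psi> :: "real \<Rightarrow> real"
  assumes cp: "convex_on UNIV \<phi>" and cs: "convex_on UNIV \<psi>" and z: "\<psi> z \<le> \<phi> z"
  shows "convex_on UNIV (\<lambda>y. if y \<le> z then max (\<psi> y) (\<phi> y) else \<phi> y)" (is "convex_on _ ?h")
proof (rule conv3I)
  fix x m y :: real assume xm: "x < m" and my: "m < y"
  have hp: "\<And>w. \<phi> w \<le> ?h w" by auto
  have hs: "\<And>w. w \<le> z \<Longrightarrow> \<psi> w \<le> ?h w" by auto
  have P: "\<phi> m * (y - x) \<le> (y - m) * ?h x + (m - x) * ?h y"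
  proof -
    have "\<phi> m * (y - x) \<le> (y - m) * \<phi> x + (m - x) * \<phi> y"
      using conv3[OF cp, of x y m] xm my by simp
    also have "\<dots> \<le> (y - m) * ?h x + (m - x) * ?h y"
      using xm my hp[of x] hp[of y] by (intro add_mono mult_left_mono) auto
    finally show ?thesis .
  qed
  show "?h m * (y - x) \<le> (y - m) * ?h x + (m - x) * ?h y"
  proof (cases "m \<le> z")
    case False then show ?thesis using P by simp
  next
    case mz: True
    have S: "\<psi> m * (y - x) \<le> (y - m) * ?h x + (m - x) * ?h y"
    proof (cases "y \<le> z")
      case True
      have "\<psi> m * (y - x) \<le> (y - m) * \<psi> x + (m - x) * \<psi> y"
        using conv3[OF cs, of x y m] xm my by simp
      also have "\<dots> \<le> (y - m) * ?h x + (m - x) * ?h y"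
        using xm my True mz hs[of x] hs[of y] by (intro add_mono mult_left_mono) auto
      finally show ?thesis .
    next
      case yz: False
      show ?thesis
      proof (cases "m = z")
        case True
        then show ?thesis using P z
          by (smt (verit, ccfv_SIG) mult_right_mono xm my)
      next
        case False
        then have mz': "m < z" using mz by simp
        have A: "\<psi> m * (z - x) \<le> (z - m) * \<psi> x + (m - x) * \<psi> z"
          using conv3[OF cs, of x z m] xm mz' by simp
        have B: "\<phi> z * (y - x) \<le> (y - z) * \<phi> x + (z - x) * \<phi> y"
          using conv3[OF cp, of x y z] xm mz' yz by simp
        have hx: "\<psi> x \<le> ?h x" "\<phi> x \<le> ?h x" using xm mz' by auto
        have hy: "\<phi> y = ?h y" using yz by simp
        define H where "H = ?h x"
        have "\<psi> m * (z - x) * (y - x) \<le> ((z - m) * H + (m - x) * \<phi> z) * (y - x)"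
        proof -
          have "(z - m) * \<psi> x + (m - x) * \<psi> z \<le> (z - m) * H + (m - x) * \<phi> z"
            using hx z xm mz' by (intro add_mono mult_left_mono) (auto simp: H_def)
          then show ?thesis using A xm my by (intro mult_right_mono) auto
        qed
        also have "\<dots> = (z - m) * H * (y - x) + (m - x) * (\<phi> z * (y - x))"
          by (simp add: algebra_simps)
        also have "\<dots> \<le> (z - m) * H * (y - x) + (m - x) * ((y - z) * H + (z - x) * \<phi> y)"
        proof -
          have "(y - z) * \<phi> x \<le> (y - z) * H" using hx yz by (intro mult_left_mono) (auto simp: H_def)
          then have "\<phi> z * (y - x) \<le> (y - z) * H + (z - x) * \<phi> y" using B by linarith
          then show ?thesis using xm by (simp add: mult_left_mono)
        qed
        also have "\<dots> = ((y - m) * H + (m - x) * ?h y) * (z - x)"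
          using hy by (simp add: algebra_simps)
        finally have "(\<psi> m * (y - x)) * (z - x) \<le> ((y - m) * H + (m - x) * ?h y) * (z - x)"
          by (simp add: algebra_simps)
        then show ?thesis using xm mz' by (simp add: H_def)
      qed
    qed
    show ?thesis using mz P S by simp
  qed
qed


lemma sets_ok: "sets mu = sets borel \<Longrightarrow> {..<(a::real)} \<in> sets mu \<and> {..a} \<in> sets mu \<and> {a} \<in> sets mu \<and> {a<..<(b::real)} \<in> sets mu \<and> {} \<in> sets mu"
  by simp

lemma pint:
  assumes "prob_space mu" "integrable mu (\<lambda>x. x)"
  shows "integrable mu (\<lambda>x. max (k - x) (0::real))"
proof -
  interpret prob_space mu by fact
  show ?thesis using assms(2) by (intro integrable_max integrable_diff) auto
qed

lemma psint:
  assumes "prob_space mu" "integrable mu (\<lambda>x. x)" "A \<in> sets mu"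
  shows "set_integrable mu A (\<lambda>x. max (k - x) (0::real))"
  unfolding set_integrable_def using integrable_mult_indicator[OF assms(3) pint[OF assms(1,2)]] .

lemma sing_int:
  assumes "prob_space mu" "sets mu = sets borel"
  shows "(LINT x:{c}|mu. max (k - x) (0::real)) = measure mu {c} * max (k - c) 0"
proof -
  interpret prob_space mu by fact
  have "(LINT x:{c}|mu. max (k - x) (0::real)) = (LINT x:{c}|mu. max (k - c) (0::real))"
    by (rule set_lebesgue_integral_cong) (auto simp: assms(2))
  also have "\<dots> = measure mu {c} * max (k - c) 0"
    by (subst set_integral_const) (auto simp: assms(2))
  finally show ?thesis .
qed

lemma p_convex: "convex_on UNIV (\<lambda>x. max (k - x) (0::real))"
proof (rule conv3I)
  fix x m y :: real assume "x < m" "m < y"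
  have a: "(y - m) * max (k - x) 0 \<ge> (y - m) * (k - x)" "(y - m) * max (k - x) 0 \<ge> 0"
    "(m - x) * max (k - y) 0 \<ge> (m - x) * (k - y)" "(m - x) * max (k - y) 0 \<ge> 0"
    using \<open>x < m\<close> \<open>m < y\<close> by (auto intro: mult_left_mono)
  have b: "(y - m) * (k - x) + (m - x) * (k - y) = (y - x) * (k - m)" by (simp add: algebra_simps)
  show "max (k - m) 0 * (y - x) \<le> (y - m) * max (k - x) 0 + (m - x) * max (k - y) 0"
    using a b by (simp add: max_def mult.commute)
qed

lemma G_mono:
  assumes "prob_space mu" "sets mu = sets borel" "is_quantile mu G" "0 < u" "u < v" "v < 1"
  shows "G u \<le> G v"
proof (rule ccontr)
  interpret prob_space mu by fact
  assume "\<not> G u \<le> G v"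
  then have "{..G v} \<subseteq> {..<G u}" by auto
  then have "measure mu {..G v} \<le> measure mu {..<G u}"
    by (intro finite_measure_mono) (auto simp: assms(2))
  moreover have "measure mu {..<G u} \<le> u" "v \<le> measure mu {..G v}"
    using assms(3-6) unfolding is_quantile_def by auto
  ultimately show False using assms by linarith
qed

lemma D_repr:
  assumes "prob_space mu" "sets mu = sets borel" "integrable mu (\<lambda>x. x)" "is_quantile mu G" "0 < u" "u < v" "v < 1"
  shows "\<exists>c1 c2 a b S. 0 \<le> c1 \<and> 0 \<le> c2 \<and> S \<in> sets mu \<and> (\<forall>k. put_fun_trunc mu G v k - put_fun_trunc mu G u k
      = c1 * max (k - a) 0 + (LINT x:S|mu. max (k - x) 0) + c2 * max (k - b) 0)"
proof -
  interpret prob_space mu by fact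
  have ab: "G u \<le> G v" using G_mono[OF assms(1,2,4-7)] .
  have qu: "measure mu {..<G u} \<le> u" "u \<le> measure mu {..G u}"
   and qv: "measure mu {..<G v} \<le> v" "v \<le> measure mu {..G v}"
    using assms(4-7) unfolding is_quantile_def by auto
  show ?thesis
  proof (cases "G u = G v")
    case True
    show ?thesis
      apply (rule exI[of _ "v - u"], rule exI[of _ 0], rule exI[of _ "G u"], rule exI[of _ 0], rule exI[of _ "{}"])
      using assms True by (auto simp: put_fun_trunc_def algebra_simps set_lebesgue_integral_def)
  next
    case False
    then have lt: "G u < G v" using ab by simp
    define a b where "a = G u" and "b = G v"
    have split: "{..<b} = {..<a} \<union> ({a} \<union> {a<..<b})" using lt by (auto simp: a_def b_def)
    have I: "(LINT x:{..<b}|mu. max (k - x) 0) = (LINT x:{..<a}|mu. max (k - x) 0) 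
       + measure mu {a} * max (k - a) 0 + (LINT x:{a<..<b}|mu. max (k - x) (0::real))" for k
    proof -
      have "(LINT x:{..<b}|mu. max (k - x) 0) = (LINT x:{..<a}|mu. max (k - x) 0) 
         + (LINT x:{a} \<union> {a<..<b}|mu. max (k - x) (0::real))"
        unfolding split
        by (rule set_integral_Un) (auto intro!: psint assms set_integrable_Un simp: assms(2))
      also have "(LINT x:{a} \<union> {a<..<b}|mu. max (k - x) (0::real)) = 
          (LINT x:{a}|mu. max (k - x) (0::real)) + (LINT x:{a<..<b}|mu. max (k - x) (0::real))"
        by (rule set_integral_Un) (auto intro!: psint assms simp: assms(2))
      finally show ?thesis using sing_int[OF assms(1,2)] by simp
    qed
    have ma: "measure mu {..a} = measure mu {..<a} + measure mu {a}"
    proof -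
      have "{..a} = {..<a} \<union> {a}" by auto
      moreover have "measure mu ({..<a} \<union> {a}) = measure mu {..<a} + measure mu {a}"
        by (rule finite_measure_Union) (auto simp: assms(2))
      ultimately show ?thesis by simp
    qed
    show ?thesis
      apply (rule exI[of _ "measure mu {..a} - u"], rule exI[of _ "v - measure mu {..<b}"],
          rule exI[of _ a], rule exI[of _ b], rule exI[of _ "{a<..<b}"])
      using qu qv I ma by (auto simp: put_fun_trunc_def a_def[symmetric] b_def[symmetric] algebra_simps assms(2))
  qed
qed

lemma D_props:
  assumes "prob_space mu" "sets mu = sets borel" "integrable mu (\<lambda>x. x)" "is_quantile mu G" "0 < u" "u < v" "v < 1"
  shows "0 \<le> put_fun_trunc mu G v k - put_fun_trunc mu G u k"
    and "k1 \<le> k2 \<Longrightarrow> put_fun_trunc mu G v k1 - put_fun_trunc mu G u k1 \<le> put_fun_trunc mu G v k2 - put_fun_trunc mu G u k2"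
proof -
  obtain c1 c2 a b S where c: "0 \<le> c1" "0 \<le> c2" "S \<in> sets mu" and eq: "\<And>k. put_fun_trunc mu G v k - put_fun_trunc mu G u k
      = c1 * max (k - a) 0 + (LINT x:S|mu. max (k - x) 0) + c2 * max (k - b) 0"
    using D_repr[OF assms] by blast
  show "0 \<le> put_fun_trunc mu G v k - put_fun_trunc mu G u k"
  proof -
    have "0 \<le> (LINT x:S|mu. max (k - x) (0::real))"
      unfolding set_lebesgue_integral_def by (intro integral_nonneg_AE) (auto split: split_indicator)
    then show ?thesis unfolding eq using c by (intro add_nonneg_nonneg) auto
  qed
  assume "k1 \<le> k2"
  have "(LINT x:S|mu. max (k1 - x) 0) \<le> (LINT x:S|mu. max (k2 - x) (0::real))"
    using \<open>k1 \<le> k2\<close> by (intro set_integral_mono psint assms c) auto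
  moreover have "c1 * max (k1 - a) 0 \<le> c1 * max (k2 - a) 0" "c2 * max (k1 - b) 0 \<le> c2 * max (k2 - b) 0"
    using c \<open>k1 \<le> k2\<close> by (auto intro!: mult_left_mono)
  ultimately show "put_fun_trunc mu G v k1 - put_fun_trunc mu G u k1 \<le> put_fun_trunc mu G v k2 - put_fun_trunc mu G u k2"
    unfolding eq by linarith
qed


lemma trunc_le:
  assumes "prob_space mu" "sets mu = sets borel" "integrable mu (\<lambda>x. x)" "is_quantile mu G" "0 < v" "v < 1"
  shows "put_fun_trunc mu G v k \<le> put_fun mu k"
proof -
  interpret prob_space mu by fact
  define b where "b = G v"
  have qv: "v \<le> measure mu {..b}" using assms(4-6) unfolding is_quantile_def b_def by auto
  have mb: "measure mu {..b} = measure mu {..<b} + measure mu {b}"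
  proof -
    have "{..b} = {..<b} \<union> {b}" by auto
    moreover have "measure mu ({..<b} \<union> {b}) = measure mu {..<b} + measure mu {b}"
      by (rule finite_measure_Union) (auto simp: assms(2))
    ultimately show ?thesis by simp
  qed
  have "put_fun_trunc mu G v k = (LINT x:{..<b}|mu. max (k - x) 0) + (v - measure mu {..<b}) * max (k - b) 0"
    by (simp add: put_fun_trunc_def b_def)
  also have "\<dots> \<le> (LINT x:{..<b}|mu. max (k - x) 0) + measure mu {b} * max (k - b) 0"
    using qv mb by (intro add_left_mono mult_right_mono) auto
  also have "\<dots> = (LINT x:{..<b} \<union> {b}|mu. max (k - x) (0::real))"
    by (subst set_integral_Un) (auto intro!: psint assms simp: assms(2) sing_int[OF assms(1,2)])
  also have "\<dots> \<le> integral\<^sup>L mu (\<lambda>x. max (k - x) 0)"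
    unfolding set_lebesgue_integral_def
    by (intro integral_mono integrable_mult_indicator pint assms) (auto simp: assms(2) split: split_indicator)
  finally show ?thesis by (simp add: put_fun_def)
qed

lemma E_nonneg:
  assumes "prob_space mu" "prob_space nu" "sets mu = sets borel" "sets nu = sets borel"
    "integrable mu (\<lambda>x. x)" "integrable nu (\<lambda>x. x)" "cx_le mu nu" "is_quantile mu G" "0 < v" "v < 1"
  shows "0 \<le> E_fun mu nu G v k"
proof -
  have "put_fun mu k \<le> put_fun nu k"
    using assms(7) p_convex[of k] pint[OF assms(1,5)] pint[OF assms(2,6)]
    unfolding cx_le_def put_fun_def by blast
  then show ?thesis using trunc_le[OF assms(1,3,5,8-10), of k] by (simp add: E_fun_def)
qed

theorem lemma4p5:
  fixes mu nu :: "real measure" and G :: "real \<Rightarrow> real" and u v z :: real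
  assumes "prob_space mu" and "prob_space nu"
    and "sets mu = sets borel" and "sets nu = sets borel"
    and "integrable mu (\<lambda>x. x)" and "integrable nu (\<lambda>x. x)"
    and "cx_le mu nu"
    and "is_quantile mu G"
    and "0 < u" and "u < v" and "v < 1"
    and "convex_hull_fun (E_fun mu nu G u) z = E_fun mu nu G u z"
    and "convex_hull_fun (E_fun mu nu G v) z = E_fun mu nu G u z"
  shows "\<forall>x\<le>z. convex_hull_fun (E_fun mu nu G u) x = convex_hull_fun (E_fun mu nu G v) x"
proof -
  define Eu where "Eu = E_fun mu nu G u"
  define Ev where "Ev = E_fun mu nu G v"
  define S where "S E x = {g x | g. convex_on UNIV g \<and> (\<forall>y. g y \<le> E y)}" for E :: "real \<Rightarrow> real" and x
  have hull: "convex_hull_fun E x = Sup (S E x)" for E x by (simp add: convex_hull_fun_def S_def)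
  have D: "Eu k - Ev k = put_fun_trunc mu G v k - put_fun_trunc mu G u k" for k
    by (simp add: Eu_def Ev_def E_fun_def)
  have Dp: "0 \<le> Eu k - Ev k" "k1 \<le> k2 \<Longrightarrow> Eu k1 - Ev k1 \<le> Eu k2 - Ev k2" for k k1 k2
    unfolding D using D_props[OF assms(1,3,5,8-11)] by auto
  have Ev0: "0 \<le> Ev k" for k
    unfolding Ev_def using E_nonneg[OF assms(1-8)] assms(9-11) by simp
  have c0: "convex_on UNIV (\<lambda>_::real. 0::real)" by (simp add: convex_on_const)
  have Sv_ne: "S Ev x \<noteq> {}" for x
  proof -
    have "(\<lambda>_::real. 0::real) x \<in> S Ev x" unfolding S_def
      by (rule CollectI, rule exI[of _ "\<lambda>_. 0"]) (use c0 Ev0 in auto)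
    then show ?thesis by blast
  qed
  have Sv_bdd: "bdd_above (S Ev x)" for x
    unfolding S_def by (rule bdd_aboveI[of _ "Ev x"]) auto
  have Su_bdd: "bdd_above (S Eu x)" for x
    unfolding S_def by (rule bdd_aboveI[of _ "Eu x"]) auto
  have Ssub: "S Ev x \<subseteq> S Eu x" for x
  proof
    fix w assume "w \<in> S Ev x"
    then obtain g where "w = g x" "convex_on UNIV g" "\<And>y. g y \<le> Ev y" unfolding S_def by blast
    moreover have "\<And>y. g y \<le> Eu y" using Dp(1) \<open>\<And>y. g y \<le> Ev y\<close> by (smt (verit))
    ultimately show "w \<in> S Eu x" unfolding S_def by blast
  qed
  have hv: "Sup (S Ev z) = Eu z" using assms(13) by (simp add: hull Ev_def Eu_def)
  have "Sup (S Ev z) \<le> Ev z"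
    by (rule cSup_least[OF Sv_ne]) (auto simp: S_def)
  then have Dz: "Eu z - Ev z = 0" using hv Dp(1)[of z] by linarith
  have eq: "Eu x = Ev x" if "x \<le> z" for x using Dp(1)[of x] Dp(2)[OF that] Dz by linarith
  show ?thesis
  proof (intro allI impI)
    fix x assume xz: "x \<le> z"
    have le1: "Sup (S Ev x) \<le> Sup (S Eu x)"
      by (rule cSup_subset_mono[OF Sv_ne Su_bdd Ssub])
    have le2: "Sup (S Eu x) \<le> Sup (S Ev x)"
    proof (rule cSup_least)
      show "S Eu x \<noteq> {}" using Sv_ne Ssub by blast
    next
      fix w assume "w \<in> S Eu x"
      then obtain g where w: "w = g x" and cg: "convex_on UNIV g" and gle: "\<And>y. g y \<le> Eu y"
        unfolding S_def by blast
      show "w \<le> Sup (S Ev x)"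
      proof (rule field_le_epsilon)
        fix e :: real assume e: "0 < e"
        have "Eu z - e < Sup (S Ev z)" using hv e by simp
        then obtain gz where "gz \<in> S Ev z" and gz: "Eu z - e < gz" using less_cSupD[OF Sv_ne] by blast
        then obtain gv where gvz: "gz = gv z" and cgv: "convex_on UNIV gv" and gvle: "\<And>y. gv y \<le> Ev y"
          unfolding S_def by blast
        define h where "h y = (if y \<le> z then max (g y - e) (gv y) else gv y)" for y
        have cg': "convex_on UNIV (\<lambda>y. g y - e)"
        proof -
          have "convex_on UNIV (\<lambda>y. g y + (- e))" by (intro convex_on_add cg) (simp add: convex_on_const)
          then show ?thesis by simp
        qed
        have "g z - e \<le> gv z" using gle[of z] gz gvz by linarith
        then have ch: "convex_on UNIV h"
          unfolding h_def by (rule glue[OF cgv cg'])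
        have hle: "h y \<le> Ev y" for y
          using gvle[of y] gle[of y] eq[of y] e unfolding h_def by auto
        have "h x \<in> S Ev x" unfolding S_def using ch hle by blast
        then have "h x \<le> Sup (S Ev x)" by (rule cSup_upper[OF _ Sv_bdd])
        moreover have "g x - e \<le> h x" using xz unfolding h_def by simp
        ultimately show "w \<le> Sup (S Ev x) + e" using w by linarith
      qed
    qed
    show "convex_hull_fun (E_fun mu nu G u) x = convex_hull_fun (E_fun mu nu G v) x"
      using le1 le2 by (simp add: hull Eu_def[symmetric] Ev_def[symmetric])
  qed
qed
end
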